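(* Let $G=(V,E)$ be any finite connected undirected unweighted graph with $n$ vertices. For the $\lambda$-mixed Moran process with $\lambda=1/2$ and $r=1$, the fixation probability from any initial mutant set $S_0\subseteq V$ is exactly $|S_0|/n$.
   Context: The $\lambda$-mixed Moran process on a connected graph $G=(V,E)$ with $n=|V|\ge 2$: each vertex hosts a resident (fitness $1$) or mutant (fitness $r>0$); the state is the mutant set $S_t\subseteq V$. Each step, independently: with probability $\lambda$ a Birth-death step (a vertex $u$ chosen with probability proportional to fitness among all vertices; a uniformly random neighbor of $u$ takes $u$'s type); with probability $1-\lambda$ a death-Birth step (a uniformly random vertex $v$ dies; a neighbor $u$ of $v$ chosen with probability proportional to fitness among the neighbors of $v$; $v$ takes $u$'s type). The fixation probability from $S_0$ is the probability that the process reaches $S_t=V$. *)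

theory Defs
  imports "HOL-Analysis.Analysis"
begin

definition connected_graph :: "'a set \<Rightarrow> ('a \<Rightarrow> 'a \<Rightarrow> bool) \<Rightarrow> bool" where
  "connected_graph V E \<longleftrightarrow>
     finite V \<and>
     (\<forall>u v. E u v \<longrightarrow> u \<in> V \<and> v \<in> V) \<and>
     (\<forall>u v. E u v \<longrightarrow> E v u) \<and>
     (\<forall>u. \<not> E u u) \<and>
     (\<forall>u\<in>V. \<forall>v\<in>V. E\<^sup>*\<^sup>* u v)"

definition nbrs :: "'a set \<Rightarrow> ('a \<Rightarrow> 'a \<Rightarrow> bool) \<Rightarrow> 'a \<Rightarrow> 'a set" where
  "nbrs V E u = {v \<in> V. E u v}"

definition fit :: "real \<Rightarrow> 'a set \<Rightarrow> 'a \<Rightarrow> real" where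
  "fit r S u = (if u \<in> S then r else 1)"

definition take_type :: "'a set \<Rightarrow> 'a \<Rightarrow> 'a \<Rightarrow> 'a set" where
  "take_type S u v = (if u \<in> S then insert v S else S - {v})"

definition bd_trans :: "'a set \<Rightarrow> ('a \<Rightarrow> 'a \<Rightarrow> bool) \<Rightarrow> real \<Rightarrow> 'a set \<Rightarrow> 'a set \<Rightarrow> real" where
  "bd_trans V E r S T =
     (\<Sum>u\<in>V. fit r S u / (\<Sum>w\<in>V. fit r S w) *
        (\<Sum>v\<in>nbrs V E u. 1 / real (card (nbrs V E u)) * of_bool (T = take_type S u v)))"

definition db_trans :: "'a set \<Rightarrow> ('a \<Rightarrow> 'a \<Rightarrow> bool) \<Rightarrow> real \<Rightarrow> 'a set \<Rightarrow> 'a set \<Rightarrow> real" where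
  "db_trans V E r S T =
     (\<Sum>v\<in>V. 1 / real (card V) *
        (\<Sum>u\<in>nbrs V E v. fit r S u / (\<Sum>w\<in>nbrs V E v. fit r S w) * of_bool (T = take_type S u v)))"

definition mixed_trans :: "'a set \<Rightarrow> ('a \<Rightarrow> 'a \<Rightarrow> bool) \<Rightarrow> real \<Rightarrow> real \<Rightarrow> 'a set \<Rightarrow> 'a set \<Rightarrow> real" where
  "mixed_trans V E lam r S T = lam * bd_trans V E r S T + (1 - lam) * db_trans V E r S T"

fun state_prob :: "'a set \<Rightarrow> ('a \<Rightarrow> 'a \<Rightarrow> bool) \<Rightarrow> real \<Rightarrow> real \<Rightarrow> 'a set \<Rightarrow> nat \<Rightarrow> 'a set \<Rightarrow> real" where
  "state_prob V E lam r S0 0 T = of_bool (T = S0)"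
| "state_prob V E lam r S0 (Suc t) T =
     (\<Sum>U\<in>Pow V. state_prob V E lam r S0 t U * mixed_trans V E lam r U T)"

text \<open>Fixation probability: probability of ever reaching S_t = V. Since V is
absorbing, this is the limit of P(S_t = V) as t tends to infinity.\<close>
definition fixation_prob :: "'a set \<Rightarrow> ('a \<Rightarrow> 'a \<Rightarrow> bool) \<Rightarrow> real \<Rightarrow> real \<Rightarrow> 'a set \<Rightarrow> real" where
  "fixation_prob V E lam r S0 = lim (\<lambda>t. state_prob V E lam r S0 t V)"

end

theory Submission imports Defs begin

locale mor =
  fixes V :: "'a set" and E :: "'a \<Rightarrow> 'a \<Rightarrow> bool"
  assumes cg: "connected_graph V E" and n2: "card V \<ge> 2"
begin

lemma finV: "finite V" using cg by (simp add: connected_graph_def)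
lemma E_in: "E u v \<Longrightarrow> u \<in> V \<and> v \<in> V" using cg by (simp add: connected_graph_def)
lemma E_sym: "E u v \<Longrightarrow> E v u" using cg by (simp add: connected_graph_def)
lemma E_conn: "u \<in> V \<Longrightarrow> v \<in> V \<Longrightarrow> E\<^sup>*\<^sup>* u v" using cg by (simp add: connected_graph_def)
lemma nbrs_sub: "nbrs V E u \<subseteq> V" by (auto simp: nbrs_def)
lemma fin_nbrs: "finite (nbrs V E u)" using finV nbrs_sub finite_subset by blast
lemma npos: "real (card V) > 0" using n2 by simp

definition deg where "deg u = real (card (nbrs V E u))"

lemma deg_pos: assumes u: "u \<in> V" shows "deg u > 0"
proof -
  have "card (V - {u}) \<ge> 1" using n2 u finV by (simp add: card_Diff_singleton)
  then obtain w where w: "w \<in> V" "w \<noteq> u"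
    by (metis Diff_iff card.empty empty_iff not_one_le_zero singleton_iff subsetI subset_antisym)
  have "E\<^sup>*\<^sup>* u w" using E_conn u w by blast
  then obtain z where "E u z" using w(2) by (metis converse_rtranclpE)
  then have "z \<in> nbrs V E u" using E_in by (auto simp: nbrs_def)
  then show ?thesis unfolding deg_def using fin_nbrs card_gt_0_iff by fastforce
qed

lemma deg_le: "deg u \<le> real (card V)"
  unfolding deg_def using card_mono[OF finV nbrs_sub] by simp

definition Q :: "('a \<Rightarrow> 'a \<Rightarrow> real) \<Rightarrow> real" where
  "Q g = (\<Sum>u\<in>V. \<Sum>v\<in>nbrs V E u. g u v / deg u) / (2 * card V)
       + (\<Sum>v\<in>V. \<Sum>u\<in>nbrs V E v. g u v / deg v) / (2 * card V)"

lemma Q_cong: assumes "\<And>u v. E u v \<Longrightarrow> f u v = g u v" shows "Q f = Q g"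
proof -
  have a: "(\<Sum>u\<in>V. \<Sum>v\<in>nbrs V E u. f u v / deg u) = (\<Sum>u\<in>V. \<Sum>v\<in>nbrs V E u. g u v / deg u)"
    by (intro sum.cong refl) (auto simp: nbrs_def assms)
  have b: "(\<Sum>v\<in>V. \<Sum>u\<in>nbrs V E v. f u v / deg v) = (\<Sum>v\<in>V. \<Sum>u\<in>nbrs V E v. g u v / deg v)"
    by (intro sum.cong refl) (auto simp: nbrs_def assms E_sym)
  show ?thesis unfolding Q_def a b ..
qed

lemma Q_const: "Q (\<lambda>u v. c) = c"
proof -
  have "(\<Sum>v\<in>nbrs V E u. c / deg u) = c" if "u \<in> V" for u
    using deg_pos[OF that] by (simp add: deg_def)
  then have "(\<Sum>u\<in>V. \<Sum>v\<in>nbrs V E u. c / deg u) = real (card V) * c" by simp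
  then show ?thesis unfolding Q_def using npos by (simp add: field_simps)
qed

lemma Q_add: "Q (\<lambda>u v. f u v + g u v) = Q f + Q g"
  unfolding Q_def by (simp add: sum.distrib add_divide_distrib field_simps)

lemma Q_cmult: "Q (\<lambda>u v. c * f u v) = c * Q f"
  unfolding Q_def by (simp add: sum_distrib_left field_simps)

lemma Q_antisym: assumes "\<And>u v. E u v \<Longrightarrow> g v u = - g u v" shows "Q g = 0"
proof -
  have "(\<Sum>v\<in>V. \<Sum>u\<in>nbrs V E v. g u v / deg v) = (\<Sum>v\<in>V. \<Sum>u\<in>nbrs V E v. - (g v u / deg v))"
    by (intro sum.cong refl) (auto simp: nbrs_def assms)
  also have "\<dots> = - (\<Sum>u\<in>V. \<Sum>v\<in>nbrs V E u. g u v / deg u)"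
    by (simp add: sum_negf)
  finally show ?thesis unfolding Q_def by (simp add: field_simps)
qed

lemma Q_lower: assumes "\<And>u v. E u v \<Longrightarrow> g u v \<ge> 0" and ab: "E a b"
  shows "Q g \<ge> (g a b / deg a) / (2 * card V)"
proof -
  have a: "a \<in> V" and b: "b \<in> nbrs V E a" using ab E_in by (auto simp: nbrs_def)
  have nn: "\<And>u v. u \<in> V \<Longrightarrow> v \<in> nbrs V E u \<Longrightarrow> g u v / deg u \<ge> 0"
    using assms(1) deg_pos by (auto simp: nbrs_def intro!: divide_nonneg_pos)
  have nn2: "\<And>u v. v \<in> V \<Longrightarrow> u \<in> nbrs V E v \<Longrightarrow> g u v / deg v \<ge> 0"
    using assms(1) deg_pos E_sym by (auto simp: nbrs_def intro!: divide_nonneg_pos)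
  have "g a b / deg a \<le> (\<Sum>v\<in>nbrs V E a. g a v / deg a)"
    by (rule member_le_sum[OF b]) (use nn a fin_nbrs in auto)
  also have "\<dots> \<le> (\<Sum>u\<in>V. \<Sum>v\<in>nbrs V E u. g u v / deg u)"
    by (rule member_le_sum[OF a, where f="\<lambda>u. \<Sum>v\<in>nbrs V E u. g u v / deg u"])
       (auto intro!: sum_nonneg nn simp: finV)
  finally have 1: "g a b / deg a \<le> (\<Sum>u\<in>V. \<Sum>v\<in>nbrs V E u. g u v / deg u)" .
  have 2: "0 \<le> (\<Sum>v\<in>V. \<Sum>u\<in>nbrs V E v. g u v / deg v)"
    by (auto intro!: sum_nonneg nn2)
  have "(g a b / deg a)/(2*card V) \<le> (\<Sum>u\<in>V. \<Sum>v\<in>nbrs V E u. g u v / deg u)/(2*card V)"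
    using 1 npos by (intro divide_right_mono) auto
  moreover have "0 \<le> (\<Sum>v\<in>V. \<Sum>u\<in>nbrs V E v. g u v / deg v)/(2*card V)" using 2 npos by simp
  ultimately show ?thesis unfolding Q_def by linarith
qed

lemma Q_nonneg: assumes "\<And>u v. E u v \<Longrightarrow> g u v \<ge> 0" shows "Q g \<ge> 0"
proof -
  have nn: "\<And>u v. u \<in> V \<Longrightarrow> v \<in> nbrs V E u \<Longrightarrow> g u v / deg u \<ge> 0"
    and nn2: "\<And>u v. v \<in> V \<Longrightarrow> u \<in> nbrs V E v \<Longrightarrow> g u v / deg v \<ge> 0"
    using assms deg_pos E_sym by (auto simp: nbrs_def intro!: divide_nonneg_pos)
  have "0 \<le> (\<Sum>u\<in>V. \<Sum>v\<in>nbrs V E u. g u v / deg u)" by (auto intro!: sum_nonneg nn)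
  moreover have "0 \<le> (\<Sum>v\<in>V. \<Sum>u\<in>nbrs V E v. g u v / deg v)" by (auto intro!: sum_nonneg nn2)
  ultimately show ?thesis unfolding Q_def using npos by simp
qed

end
context mor begin

lemma delta_sum:
  fixes c :: "'a \<Rightarrow> 'a \<Rightarrow> real" and h :: "'a set \<Rightarrow> real"
  assumes "\<And>u v. u \<in> V \<Longrightarrow> v \<in> nbrs V E u \<Longrightarrow> X u v \<in> Pow V"
  shows "(\<Sum>T\<in>Pow V. (\<Sum>u\<in>V. \<Sum>v\<in>nbrs V E u. c u v * of_bool (T = X u v)) * h T)
       = (\<Sum>u\<in>V. \<Sum>v\<in>nbrs V E u. c u v * h (X u v))"
proof -
  have "(\<Sum>T\<in>Pow V. (\<Sum>u\<in>V. \<Sum>v\<in>nbrs V E u. c u v * of_bool (T = X u v)) * h T)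
      = (\<Sum>T\<in>Pow V. \<Sum>u\<in>V. \<Sum>v\<in>nbrs V E u. c u v * of_bool (T = X u v) * h T)"
    by (simp only: sum_distrib_right)
  also have "\<dots> = (\<Sum>u\<in>V. \<Sum>v\<in>nbrs V E u. \<Sum>T\<in>Pow V. c u v * of_bool (T = X u v) * h T)"
    by (subst sum.swap) (subst sum.swap, rule refl)
  also have "\<dots> = (\<Sum>u\<in>V. \<Sum>v\<in>nbrs V E u. c u v * h (X u v))"
  proof (intro sum.cong refl)
    fix u v assume "u \<in> V" "v \<in> nbrs V E u"
    then have X: "X u v \<in> Pow V" using assms by blast
    have "(\<Sum>T\<in>Pow V. c u v * of_bool (T = X u v) * h T) = (\<Sum>T\<in>Pow V. if X u v = T then c u v * h (X u v) else 0)"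
      by (intro sum.cong refl) auto
    also have "\<dots> = c u v * h (X u v)" using X finV by simp
    finally show "(\<Sum>T\<in>Pow V. c u v * of_bool (T = X u v) * h T) = c u v * h (X u v)" .
  qed
  finally show ?thesis .
qed

lemma tt_sub: "U \<subseteq> V \<Longrightarrow> v \<in> V \<Longrightarrow> take_type U u v \<in> Pow V"
  by (auto simp: take_type_def)

lemma bd_eq: "bd_trans V E 1 U T = (\<Sum>u\<in>V. \<Sum>v\<in>nbrs V E u. (1 / (card V * deg u)) * of_bool (T = take_type U u v))"
  by (simp add: bd_trans_def fit_def deg_def sum_distrib_left)

lemma db_eq: "db_trans V E 1 U T = (\<Sum>v\<in>V. \<Sum>u\<in>nbrs V E v. (1 / (card V * deg v)) * of_bool (T = take_type U u v))"
  by (simp add: db_trans_def fit_def deg_def sum_distrib_left)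

lemma trans_eq: assumes U: "U \<subseteq> V"
  shows "(\<Sum>T\<in>Pow V. mixed_trans V E (1/2) 1 U T * h T) = Q (\<lambda>u v. h (take_type U u v))"
proof -
  have "(\<Sum>T\<in>Pow V. mixed_trans V E (1/2) 1 U T * h T)
     = (1/2) * (\<Sum>T\<in>Pow V. bd_trans V E 1 U T * h T) + (1/2) * (\<Sum>T\<in>Pow V. db_trans V E 1 U T * h T)"
    by (simp add: mixed_trans_def sum_distrib_left sum.distrib algebra_simps)
  also have "(\<Sum>T\<in>Pow V. bd_trans V E 1 U T * h T) = (\<Sum>u\<in>V. \<Sum>v\<in>nbrs V E u. (1 / (card V * deg u)) * h (take_type U u v))"
    unfolding bd_eq by (rule delta_sum) (use U nbrs_sub tt_sub in blast)
  also have "(\<Sum>T\<in>Pow V. db_trans V E 1 U T * h T) = (\<Sum>v\<in>V. \<Sum>u\<in>nbrs V E v. (1 / (card V * deg v)) * h (take_type U u v))"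
    unfolding db_eq by (rule delta_sum[where X="\<lambda>v u. take_type U u v"]) (use U nbrs_sub tt_sub in blast)
  finally show ?thesis unfolding Q_def by (simp add: sum_distrib_left sum_divide_distrib mult_ac)
qed

lemma mt_nonneg: "mixed_trans V E (1/2) 1 U T \<ge> 0"
  unfolding mixed_trans_def bd_eq db_eq using deg_pos
  by (auto intro!: add_nonneg_nonneg sum_nonneg mult_nonneg_nonneg simp: nbrs_def less_imp_le)

end
context mor begin

definition dd :: "'a set \<Rightarrow> 'a \<Rightarrow> 'a \<Rightarrow> real" where
  "dd U u v = (if u \<in> U then (if v \<in> U then 0 else 1) else (if v \<in> U then -1 else 0))"

lemma card_tt: assumes "U \<subseteq> V" "v \<in> V"
  shows "real (card (take_type U u v)) = real (card U) + dd U u v"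
proof -
  have fU: "finite U" using assms finV finite_subset by blast
  show ?thesis
  proof (cases "v \<in> U")
    case True
    then have "card U \<ge> 1" using fU by (metis One_nat_def Suc_leI card_gt_0_iff empty_iff)
    then show ?thesis using True fU by (auto simp: take_type_def dd_def card_Diff_singleton_if of_nat_diff insert_absorb)
  qed (use fU in \<open>auto simp: take_type_def dd_def card_insert_if\<close>)
qed

lemma dd_anti: "dd U v u = - dd U u v" by (auto simp: dd_def)

lemma Q_dd: "Q (dd U) = 0"
  by (rule Q_antisym) (rule dd_anti)

lemma Q_card: assumes "U \<subseteq> V" shows "Q (\<lambda>u v. real (card (take_type U u v))) = real (card U)"
proof -
  have "Q (\<lambda>u v. real (card (take_type U u v))) = Q (\<lambda>u v. real (card U) + dd U u v)"
    by (rule Q_cong) (use card_tt assms E_in in blast)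
  also have "\<dots> = real (card U)" by (simp only: Q_add Q_const Q_dd)
  finally show ?thesis .
qed

definition tr :: "'a set \<Rightarrow> real" where "tr U = of_bool (U \<noteq> {} \<and> U \<noteq> V)"

lemma cut: assumes "U \<subseteq> V" "U \<noteq> {}" "U \<noteq> V" shows "\<exists>a b. E a b \<and> a \<in> U \<and> b \<notin> U"
proof -
  obtain x where x: "x \<in> U" using assms by blast
  obtain y where y: "y \<in> V" "y \<notin> U" using assms by blast
  have "E\<^sup>*\<^sup>* x y" using E_conn x y assms by blast
  then have "y \<in> U \<or> (\<exists>a b. E a b \<and> a \<in> U \<and> b \<notin> U)"
    by (induction rule: rtranclp_induct) (use x in auto)
  then show ?thesis using y by blast
qed

definition kap :: real where "kap = 1 / (2 * real (card V) ^ 2)"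

lemma kap_pos: "kap > 0" unfolding kap_def using npos by simp

lemma Q_sq: assumes U: "U \<subseteq> V"
  shows "Q (\<lambda>u v. real (card (take_type U u v)) ^ 2) \<ge> real (card U) ^ 2 + kap * tr U"
proof -
  let ?c = "real (card U)"
  have "Q (\<lambda>u v. real (card (take_type U u v)) ^ 2) = Q (\<lambda>u v. ?c^2 + ((2 * ?c) * dd U u v + (dd U u v)^2))"
  proof (rule Q_cong)
    fix u v assume "E u v"
    then have "real (card (take_type U u v)) = ?c + dd U u v" using card_tt U E_in by blast
    then show "real (card (take_type U u v)) ^ 2 = ?c^2 + ((2 * ?c) * dd U u v + (dd U u v)^2)"
      by (simp add: power2_sum)
  qed
  also have "\<dots> = Q (\<lambda>u v. ?c^2) + Q (\<lambda>u v. (2*?c)*dd U u v + (dd U u v)^2)" by (rule Q_add)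
  also have "Q (\<lambda>u v. (2*?c)*dd U u v + (dd U u v)^2) = Q (\<lambda>u v. (2*?c)*dd U u v) + Q (\<lambda>u v. (dd U u v)^2)" by (rule Q_add)
  also have "Q (\<lambda>u v. (2*?c)*dd U u v) = (2*?c) * Q (dd U)" by (rule Q_cmult)
  also have "Q (\<lambda>u v. ?c^2) = ?c^2" by (rule Q_const)
  finally have eq: "Q (\<lambda>u v. real (card (take_type U u v)) ^ 2) = ?c^2 + Q (\<lambda>u v. (dd U u v)^2)" by (simp add: Q_dd)
  have "Q (\<lambda>u v. (dd U u v)^2) \<ge> kap * tr U"
  proof (cases "U \<noteq> {} \<and> U \<noteq> V")
    case True
    then obtain a b where ab: "E a b" "a \<in> U" "b \<notin> U" using cut U by blast
    have "Q (\<lambda>u v. (dd U u v)^2) \<ge> ((dd U a b)^2 / deg a) / (2 * card V)"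
      by (rule Q_lower[OF _ ab(1)]) simp
    moreover have "(dd U a b)^2 = 1" using ab by (simp add: dd_def)
    moreover have "1 / deg a / (2 * card V) \<ge> kap"
    proof -
      have "deg a > 0" "deg a \<le> card V" using deg_pos deg_le E_in ab by auto
      then have "2 * card V * deg a \<le> 2 * real (card V) ^ 2" "0 < 2 * card V * deg a"
        using npos by (auto simp: power2_eq_square)
      then have "1 / (2 * real (card V) ^ 2) \<le> 1 / (2 * card V * deg a)"
        by (intro frac_le) auto
      then show ?thesis unfolding kap_def by (simp add: mult_ac)
    qed
    ultimately show ?thesis using True by (simp add: tr_def)
  next
    case False
    then have "tr U = 0" by (auto simp: tr_def)
    then show ?thesis by (simp add: Q_nonneg)
  qed
  then show ?thesis using eq by simp
qed

end
context mor begin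

definition pp where "pp S0 t T = state_prob V E (1/2) 1 S0 t T"
definition ee where "ee S0 t h = (\<Sum>T\<in>Pow V. pp S0 t T * h T)"

lemma pp_nonneg: "pp S0 t T \<ge> 0"
proof (induction t arbitrary: T)
  case 0 then show ?case by (simp add: pp_def)
next
  case (Suc t) then show ?case
    by (simp add: pp_def sum_nonneg mt_nonneg)
qed

lemma ee_0: "S0 \<subseteq> V \<Longrightarrow> ee S0 0 h = h S0"
proof -
  assume S0: "S0 \<subseteq> V"
  have "ee S0 0 h = (\<Sum>T\<in>Pow V. if S0 = T then h S0 else 0)"
    unfolding ee_def pp_def by (intro sum.cong refl) auto
  also have "\<dots> = h S0" using S0 finV by simp
  finally show ?thesis .
qed

lemma ee_step: "ee S0 (Suc t) h = ee S0 t (\<lambda>U. Q (\<lambda>u v. h (take_type U u v)))"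
proof -
  have "ee S0 (Suc t) h = (\<Sum>T\<in>Pow V. \<Sum>U\<in>Pow V. pp S0 t U * (mixed_trans V E (1/2) 1 U T * h T))"
    unfolding ee_def by (simp add: pp_def sum_distrib_right mult.assoc)
  also have "\<dots> = (\<Sum>U\<in>Pow V. \<Sum>T\<in>Pow V. pp S0 t U * (mixed_trans V E (1/2) 1 U T * h T))"
    by (rule sum.swap)
  also have "\<dots> = (\<Sum>U\<in>Pow V. pp S0 t U * (\<Sum>T\<in>Pow V. mixed_trans V E (1/2) 1 U T * h T))"
    by (simp add: sum_distrib_left)
  also have "\<dots> = ee S0 t (\<lambda>U. Q (\<lambda>u v. h (take_type U u v)))"
    unfolding ee_def by (intro sum.cong refl) (simp add: trans_eq)
  finally show ?thesis .
qed

lemma ee_cong: "(\<And>U. U \<subseteq> V \<Longrightarrow> f U = g U) \<Longrightarrow> ee S0 t f = ee S0 t g"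
  unfolding ee_def by (intro sum.cong refl) auto

lemma ee_mono: "(\<And>U. U \<subseteq> V \<Longrightarrow> f U \<le> g U) \<Longrightarrow> ee S0 t f \<le> ee S0 t g"
  unfolding ee_def by (intro sum_mono mult_left_mono) (auto simp: pp_nonneg)

lemma ee_add: "ee S0 t (\<lambda>U. f U + g U) = ee S0 t f + ee S0 t g"
  unfolding ee_def by (simp add: sum.distrib algebra_simps)

lemma ee_cmult: "ee S0 t (\<lambda>U. c * f U) = c * ee S0 t f"
  unfolding ee_def by (simp add: sum_distrib_left algebra_simps)

context fixes S0 assumes S0: "S0 \<subseteq> V" begin

lemma ee_one: "ee S0 t (\<lambda>U. 1) = 1"
  by (induction t) (simp_all add: ee_0 S0 ee_step Q_const)

lemma ee_const: "ee S0 t (\<lambda>U. c) = c"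
  using ee_cmult[of S0 t c "\<lambda>U. 1"] ee_one by simp

lemma ee_card: "ee S0 t (\<lambda>U. real (card U)) = real (card S0)"
proof (induction t)
  case 0 then show ?case by (simp add: ee_0 S0)
next
  case (Suc t)
  have "ee S0 (Suc t) (\<lambda>U. real (card U)) = ee S0 t (\<lambda>U. real (card U))"
    unfolding ee_step by (rule ee_cong) (simp add: Q_card)
  then show ?case using Suc by simp
qed

lemma ee_sq_step: "ee S0 (Suc t) (\<lambda>U. real (card U) ^ 2) \<ge> ee S0 t (\<lambda>U. real (card U) ^ 2) + kap * ee S0 t tr"
proof -
  have "ee S0 t (\<lambda>U. real (card U) ^ 2 + kap * tr U) \<le> ee S0 (Suc t) (\<lambda>U. real (card U) ^ 2)"
    unfolding ee_step by (rule ee_mono) (rule Q_sq)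
  then show ?thesis by (simp add: ee_add ee_cmult)
qed

lemma ee_sq_le: "ee S0 t (\<lambda>U. real (card U) ^ 2) \<le> real (card V) ^ 2"
proof -
  have "ee S0 t (\<lambda>U. real (card U) ^ 2) \<le> ee S0 t (\<lambda>U. real (card V) ^ 2)"
    by (rule ee_mono) (use finV card_mono in \<open>auto intro!: power_mono\<close>)
  then show ?thesis by (simp add: ee_const)
qed

lemma ee_tr_nonneg: "ee S0 t tr \<ge> 0"
  using ee_mono[of "\<lambda>U. 0" tr S0 t] ee_const[of t 0] by (simp add: tr_def)

lemma ee_sq_acc: "ee S0 t (\<lambda>U. real (card U) ^ 2) \<ge> kap * (\<Sum>s<t. ee S0 s tr)"
proof (induction t)
  case 0
  then show ?case using ee_mono[of "\<lambda>U. 0" "\<lambda>U. real (card U) ^ 2" S0 0] ee_const[of 0 0] by simp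
next
  case (Suc t)
  then show ?case using ee_sq_step[of t] by (simp add: algebra_simps)
qed

lemma tr_lim: "(\<lambda>t. ee S0 t tr) \<longlonglongrightarrow> 0"
proof -
  have "summable (\<lambda>t. ee S0 t tr)"
  proof (rule summableI_nonneg_bounded)
    fix t
    show "(\<Sum>s<t. ee S0 s tr) \<le> real (card V) ^ 2 / kap"
      using ee_sq_acc[of t] ee_sq_le[of t] kap_pos by (simp add: field_simps)
  qed (rule ee_tr_nonneg)
  then show ?thesis by (rule summable_LIMSEQ_zero)
qed

lemma fix_lim: "(\<lambda>t. pp S0 t V) \<longlonglongrightarrow> real (card S0) / real (card V)"
proof -
  let ?X = "\<lambda>t. ee S0 t (\<lambda>U. real (card U) * tr U)"
  have split: "ee S0 t (\<lambda>U. real (card U)) = real (card V) * pp S0 t V + ?X t" for t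
  proof -
    have "ee S0 t (\<lambda>U. real (card U)) = ee S0 t (\<lambda>U. real (card V) * of_bool (U = V) + real (card U) * tr U)"
      by (rule ee_cong) (auto simp: tr_def)
    also have "ee S0 t (\<lambda>U. of_bool (U = V)) = pp S0 t V"
    proof -
      have "ee S0 t (\<lambda>U. of_bool (U = V)) = (\<Sum>T\<in>Pow V. if V = T then pp S0 t V else 0)"
        unfolding ee_def by (intro sum.cong refl) auto
      also have "\<dots> = pp S0 t V" using finV by simp
      finally show ?thesis .
    qed
    ultimately show ?thesis by (simp add: ee_add ee_cmult)
  qed
  have X0: "?X \<longlonglongrightarrow> 0"
  proof (rule real_tendsto_sandwich[where f="\<lambda>t. 0" and h="\<lambda>t. real (card V) * ee S0 t tr"])
    show "\<forall>\<^sub>F t in sequentially. 0 \<le> ?X t"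
      using ee_mono[of "\<lambda>U. 0" "\<lambda>U. real (card U) * tr U" S0] ee_const[of _ 0]
      by (auto simp: tr_def)
    show "\<forall>\<^sub>F t in sequentially. ?X t \<le> real (card V) * ee S0 t tr"
    proof (rule always_eventually, rule allI)
      fix t
      have "?X t \<le> ee S0 t (\<lambda>U. real (card V) * tr U)"
        by (rule ee_mono) (use finV card_mono in \<open>auto simp: tr_def\<close>)
      then show "?X t \<le> real (card V) * ee S0 t tr" by (simp add: ee_cmult)
    qed
    show "(\<lambda>t. 0) \<longlonglongrightarrow> (0::real)" by simp
    show "(\<lambda>t. real (card V) * ee S0 t tr) \<longlonglongrightarrow> 0"
      using tendsto_mult_left[OF tr_lim, of "real (card V)"] by simp
  qed
  have eq: "pp S0 t V = real (card S0) / real (card V) - ?X t / real (card V)" for t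
    using split[of t] ee_card[of t] npos by (simp add: field_simps)
  have "(\<lambda>t. real (card S0) / real (card V) - ?X t / real (card V)) \<longlonglongrightarrow> real (card S0) / real (card V) - 0 / real (card V)"
    by (intro tendsto_intros X0) (use n2 in simp)
  moreover have "real (card V) \<noteq> 0" using n2 by simp
  ultimately show ?thesis unfolding eq by simp
qed

end
end

theorem mainTheorem4:
  fixes V :: "'a set" and E :: "'a \<Rightarrow> 'a \<Rightarrow> bool" and S0 :: "'a set"
  assumes "connected_graph V E"
    and "card V \<ge> 2"
    and "S0 \<subseteq> V"
  shows "fixation_prob V E (1/2) 1 S0 = real (card S0) / real (card V)"
proof -
  interpret mor V E using assms(1,2) by unfold_locales
  show ?thesis unfolding fixation_prob_def
    using fix_lim[OF assms(3)] by (simp add: pp_def limI)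
qed

end
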